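(* Consider a network $N$ with service-vector set $\mathcal{S}$ and routing matrix $R$. Fix $w\in\mathbb{R}_{++}^n$, an arrival function $A(\cdot)$, and $\lambda\in\mathbb{R}_+^n$. Let $Q(\cdot)$ be a queue length process of $N$ driven by $A(\cdot)$ under a $w$-WMW policy. Let $W=\mathrm{diag}(w)$, $\tilde\lambda=W^{1/2}\lambda$, $\tilde A(t)=W^{1/2}A(t)$ for $t\in\mathbb{Z}_+$, and let $\tilde N$ be the network with service-vector set $\tilde{\mathcal{S}}=W^{1/2}\mathcal{S}$ and routing matrix $\tilde R=W^{1/2}RW^{-1/2}$. Then: (a) $\tilde Q(t)=W^{1/2}Q(t)$ is a queue length process of $\tilde N$ driven by $\tilde A(\cdot)$ under a MW policy; (b) $\tilde q(t)=W^{1/2}q(t)$ is a fluid solution of $\tilde N$ for arrival rate $\tilde\lambda$ and unit weights if and only if $q(\cdot)$ is a fluid solution of $N$ for arrival rate $\lambda$ and weights $w$.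
   Context: A network consists of $n$ queues, a routing matrix $R\in\mathbb{R}^{n\times n}$ with nonnegative entries, and a finite set $\mathcal{S}\subset\mathbb{R}_+^n$ of service vectors. A queue length process driven by $A:\mathbb{Z}_+\to\mathbb{R}_+^n$ evolves by $Q(t+1)=Q(t)+A(t)+(R-I)\min(\mu(t),Q(t))$ (componentwise min), $\mu(t)\in\mathcal{S}$. For weights $w\in\mathbb{R}_{++}^n$, $\mathcal{S}_w(x)=\arg\max_{\mu\in\mathcal{S}}x^T\mathrm{diag}(w)(I-R)\mu$; the $w$-WMW policy chooses $\mu(t)\in\mathcal{S}_w(Q(t))$ arbitrarily; MW is $w=(1,\dots,1)$. A fluid solution for $\lambda\in\mathbb{R}_+^n$ and weights $w$ is an absolutely continuous $q:\mathbb{R}_+\to\mathbb{R}_+^n$ for which there exist $s_\mu:\mathbb{R}_+\to[0,1]$ ($\mu\in\mathcal{S}$) and $y:\mathbb{R}_+\to\mathbb{R}_+^n$ with, for a.e. $t$: $\dot q(t)=\lambda+(R-I)(\sum_\mu s_\mu(t)\mu-y(t))$, $\sum_\mu s_\mu(t)=1$, $y_i(t)\le\sum_\mu s_\mu(t)\mu_i$, $q_i(t)>0\Rightarrow y_i(t)=0$, $\mu\notin\mathcal{S}_w(q(t))\Rightarrow s_\mu(t)=0$. $W^{1/2}\mathcal{S}=\{W^{1/2}\mu:\mu\in\mathcal{S}\}$. *)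

theory Defs
  imports "HOL-Analysis.Analysis"
begin

text \<open>Vectors in R^n are modelled as real^'n, matrices as real^'n^'n
 (n = CARD('n), an arbitrary finite index type).\<close>

definition nonneg_vec :: "real^'n \<Rightarrow> bool" where
  "nonneg_vec x \<longleftrightarrow> (\<forall>i. 0 \<le> x $ i)"

definition pos_vec :: "real^'n \<Rightarrow> bool" where
  "pos_vec x \<longleftrightarrow> (\<forall>i. 0 < x $ i)"

definition diagm :: "real^'n \<Rightarrow> real^'n^'n" where
  "diagm d = (\<chi> i j. if i = j then d $ i else 0)"

definition vmin :: "real^'n \<Rightarrow> real^'n \<Rightarrow> real^'n" where
  "vmin x y = (\<chi> i. min (x $ i) (y $ i))"

definition sqrtW :: "real^'n \<Rightarrow> real^'n \<Rightarrow> real^'n" where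
  "sqrtW w x = diagm (\<chi> i. sqrt (w $ i)) *v x"

definition scaled_routing :: "real^'n \<Rightarrow> real^'n^'n \<Rightarrow> real^'n^'n" where
  "scaled_routing w R = diagm (\<chi> i. sqrt (w $ i)) ** R ** diagm (\<chi> i. inverse (sqrt (w $ i)))"

definition wmw_set :: "real^'n^'n \<Rightarrow> (real^'n) set \<Rightarrow> real^'n \<Rightarrow> real^'n \<Rightarrow> (real^'n) set" where
  "wmw_set R S w x =
     {\<mu> \<in> S. \<forall>\<nu> \<in> S. x \<bullet> ((diagm w ** (mat 1 - R)) *v \<nu>) \<le> x \<bullet> ((diagm w ** (mat 1 - R)) *v \<mu>)}"

definition wmw_qlp :: "real^'n^'n \<Rightarrow> (real^'n) set \<Rightarrow> real^'n \<Rightarrow> (nat \<Rightarrow> real^'n) \<Rightarrow> (nat \<Rightarrow> real^'n) \<Rightarrow> bool" where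
  "wmw_qlp R S w A Q \<longleftrightarrow> nonneg_vec (Q 0) \<and>
     (\<exists>\<mu> :: nat \<Rightarrow> real^'n. \<forall>t. \<mu> t \<in> wmw_set R S w (Q t) \<and>
        Q (Suc t) = Q t + A t + (R - mat 1) *v vmin (\<mu> t) (Q t))"

abbreviation mw_qlp :: "real^'n^'n \<Rightarrow> (real^'n) set \<Rightarrow> (nat \<Rightarrow> real^'n) \<Rightarrow> (nat \<Rightarrow> real^'n) \<Rightarrow> bool" where
  "mw_qlp R S A Q \<equiv> wmw_qlp R S 1 A Q"

definition abs_cont_on :: "real \<Rightarrow> real \<Rightarrow> (real \<Rightarrow> 'a::real_normed_vector) \<Rightarrow> bool" where
  "abs_cont_on a b f \<longleftrightarrow>
     (\<forall>\<epsilon>>0. \<exists>\<delta>>0. \<forall>(m::nat) (l::nat \<Rightarrow> real) (u::nat \<Rightarrow> real).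
        (\<forall>k<m. a \<le> l k \<and> l k \<le> u k \<and> u k \<le> b) \<and>
        (\<forall>j<m. \<forall>k<m. j \<noteq> k \<longrightarrow> u j \<le> l k \<or> u k \<le> l j) \<and>
        (\<Sum>k<m. u k - l k) < \<delta>
        \<longrightarrow> (\<Sum>k<m. norm (f (u k) - f (l k))) < \<epsilon>)"

definition abs_cont_Rplus :: "(real \<Rightarrow> 'a::real_normed_vector) \<Rightarrow> bool" where
  "abs_cont_Rplus f \<longleftrightarrow> (\<forall>T\<ge>0. abs_cont_on 0 T f)"

text \<open>Fluid solution of network (R,S) for arrival rate lam and weights w.
  q is only relevant on R_+ = {0..}.\<close>
definition fluid_solution ::
  "real^'n^'n \<Rightarrow> (real^'n) set \<Rightarrow> real^'n \<Rightarrow> real^'n \<Rightarrow> (real \<Rightarrow> real^'n) \<Rightarrow> bool" where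
  "fluid_solution R S lam w q \<longleftrightarrow>
     abs_cont_Rplus q \<and> (\<forall>t\<ge>0. nonneg_vec (q t)) \<and>
     (\<exists>(s :: real^'n \<Rightarrow> real \<Rightarrow> real) (y :: real \<Rightarrow> real^'n).
        (\<forall>\<mu>\<in>S. \<forall>t\<ge>0. 0 \<le> s \<mu> t \<and> s \<mu> t \<le> 1) \<and>
        (\<forall>t\<ge>0. nonneg_vec (y t)) \<and>
        (AE t in lborel. 0 \<le> t \<longrightarrow>
           (q has_vector_derivative
              (lam + (R - mat 1) *v ((\<Sum>\<mu>\<in>S. s \<mu> t *\<^sub>R \<mu>) - y t))) (at t within {0..}) \<and>
           (\<Sum>\<mu>\<in>S. s \<mu> t) = 1 \<and>
           (\<forall>i. y t $ i \<le> (\<Sum>\<mu>\<in>S. s \<mu> t * \<mu> $ i)) \<and>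
           (\<forall>i. q t $ i > 0 \<longrightarrow> y t $ i = 0) \<and>
           (\<forall>\<mu>\<in>S. \<mu> \<notin> wmw_set R S w (q t) \<longrightarrow> s \<mu> t = 0)))"

end

theory Submission
  imports Defs
begin

lemma diagm_mult: "(diagm d *v y) $ i = d$i * y$i"
proof -
  have e: "\<And>j. (if i = j then d$i else 0) * y$j = (if i = j then d$i * y$i else 0)" by simp
  show ?thesis by (simp add: diagm_def matrix_vector_mult_def e)
qed

lemma sqrtW_nth: "sqrtW w x $ i = sqrt (w$i) * x$i"
  by (simp add: sqrtW_def diagm_mult)

definition sqrtWi :: "real^'n \<Rightarrow> real^'n \<Rightarrow> real^'n" where
  "sqrtWi w x = (\<chi> i. x$i / sqrt (w$i))"

lemma sqrtWi_nth: "sqrtWi w x $ i = x$i / sqrt (w$i)"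
  by (simp add: sqrtWi_def)

lemma w_ne: "pos_vec w \<Longrightarrow> w$i \<noteq> 0"
  unfolding pos_vec_def by (metis less_irrefl)

lemma sqrtW_ne: "pos_vec w \<Longrightarrow> sqrt (w$i) \<noteq> 0"
  unfolding pos_vec_def by (metis less_irrefl real_sqrt_eq_zero_cancel_iff)

lemma sqrtWi_sqrtW: "pos_vec w \<Longrightarrow> sqrtWi w (sqrtW w x) = x"
  by (simp add: vec_eq_iff sqrtWi_nth sqrtW_nth sqrtW_ne w_ne)

lemma sqrtW_sqrtWi: "pos_vec w \<Longrightarrow> sqrtW w (sqrtWi w x) = x"
  by (simp add: vec_eq_iff sqrtWi_nth sqrtW_nth sqrtW_ne w_ne)

lemma inj_sqrtW: "pos_vec w \<Longrightarrow> inj (sqrtW w)"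
  by (metis injI sqrtWi_sqrtW)

lemma linear_sqrtW: "linear (sqrtW w)"
  by (rule linearI) (simp_all add: vec_eq_iff sqrtW_nth algebra_simps)

lemma linear_sqrtWi: "linear (sqrtWi w)"
  by (rule linearI) (simp_all add: vec_eq_iff sqrtWi_nth algebra_simps add_divide_distrib)

lemma bl_sqrtW: "bounded_linear (sqrtW w)"
  using linear_sqrtW linear_conv_bounded_linear by blast

lemma bl_sqrtWi: "bounded_linear (sqrtWi w)"
  using linear_sqrtWi linear_conv_bounded_linear by blast

lemma scaled_mult: assumes "pos_vec w"
  shows "scaled_routing w R *v sqrtW w x = sqrtW w (R *v x)"
proof -
  have "diagm (\<chi> i. inverse (sqrt (w $ i))) *v (diagm (\<chi> i. sqrt (w $ i)) *v x) = x"
    using assms by (simp add: vec_eq_iff diagm_mult sqrtW_ne w_ne)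
  then show ?thesis unfolding scaled_routing_def sqrtW_def
    by (metis matrix_vector_mul_assoc)
qed

lemma scaled_mult2: assumes "pos_vec w"
  shows "(scaled_routing w R - mat 1) *v sqrtW w x = sqrtW w ((R - mat 1) *v x)"
  using assms by (simp add: matrix_vector_mult_diff_rdistrib scaled_mult linear_diff[OF linear_sqrtW])

lemma diagm_one: "diagm 1 = mat 1"
  by (simp add: diagm_def mat_def vec_eq_iff)

lemma scaled_mult3: assumes "pos_vec w"
  shows "(diagm 1 ** (mat 1 - scaled_routing w R)) *v sqrtW w x = sqrtW w ((mat 1 - R) *v x)"
  using assms by (simp add: diagm_one matrix_vector_mult_diff_rdistrib scaled_mult linear_diff[OF linear_sqrtW])

lemma inner_sqrtW: assumes "pos_vec w"
  shows "sqrtW w x \<bullet> sqrtW w y = x \<bullet> (diagm w *v y)"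
proof -
  have "sqrtW w x \<bullet> sqrtW w y = (\<Sum>i\<in>UNIV. sqrt (w$i) * x$i * (sqrt (w$i) * y$i))"
    by (simp add: inner_vec_def sqrtW_nth)
  also have "\<dots> = (\<Sum>i\<in>UNIV. x$i * (w$i * y$i))"
    using assms by (intro sum.cong) (auto simp: pos_vec_def algebra_simps less_imp_le)
  also have "\<dots> = x \<bullet> (diagm w *v y)"
    by (simp add: inner_vec_def diagm_mult)
  finally show ?thesis .
qed

lemma wmw_scaled: assumes "pos_vec w"
  shows "sqrtW w \<mu> \<in> wmw_set (scaled_routing w R) (sqrtW w ` S) 1 (sqrtW w x) \<longleftrightarrow> \<mu> \<in> wmw_set R S w x"
proof -
  have e: "sqrtW w x \<bullet> ((diagm 1 ** (mat 1 - scaled_routing w R)) *v sqrtW w \<nu>) =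
     x \<bullet> ((diagm w ** (mat 1 - R)) *v \<nu>)" for \<nu>
    by (simp only: scaled_mult3[OF assms] inner_sqrtW[OF assms] matrix_vector_mul_assoc)
  have i: "sqrtW w \<mu> \<in> sqrtW w ` S \<longleftrightarrow> \<mu> \<in> S"
    using inj_sqrtW[OF assms] by (simp add: inj_image_mem_iff)
  show ?thesis unfolding wmw_set_def using e i by auto
qed

lemma vmin_sqrtW: assumes "pos_vec w"
  shows "vmin (sqrtW w a) (sqrtW w b) = sqrtW w (vmin a b)"
  using assms by (simp add: vec_eq_iff vmin_def sqrtW_nth pos_vec_def min_def)

lemma nonneg_sqrtW: assumes "pos_vec w"
  shows "nonneg_vec (sqrtW w a) \<longleftrightarrow> nonneg_vec a"
proof -
  have "0 \<le> sqrt (w$i) * a$i \<longleftrightarrow> 0 \<le> a$i" for i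
    using assms[unfolded pos_vec_def, rule_format, of i] by (simp add: zero_le_mult_iff)
  then show ?thesis by (simp add: nonneg_vec_def sqrtW_nth)
qed

lemma abs_cont_bl: assumes "bounded_linear g" "abs_cont_on a b f"
  shows "abs_cont_on a b (\<lambda>t. g (f t))"
  unfolding abs_cont_on_def
proof (intro allI impI)
  fix e :: real assume e: "e > 0"
  obtain K where K: "K > 0" "\<And>x. norm (g x) \<le> norm x * K"
    using bounded_linear.pos_bounded[OF assms(1)] by blast
  obtain d where d: "d > 0" and H: "\<And>m l u. (\<forall>k<m. a \<le> l k \<and> l k \<le> u k \<and> u k \<le> b) \<and>
        (\<forall>j<m. \<forall>k<m. j \<noteq> k \<longrightarrow> u j \<le> l k \<or> u k \<le> l j) \<and>
        (\<Sum>k<m. u k - l k) < d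
        \<Longrightarrow> (\<Sum>k<(m::nat). norm (f (u k) - f (l k))) < e / K"
  proof -
    have "e / K > 0" using e K by simp
    from assms(2)[unfolded abs_cont_on_def, rule_format, OF this] show ?thesis
      using that by blast
  qed
  show "\<exists>d>0. \<forall>(m::nat) l u. (\<forall>k<m. a \<le> l k \<and> l k \<le> u k \<and> u k \<le> b) \<and>
        (\<forall>j<m. \<forall>k<m. j \<noteq> k \<longrightarrow> u j \<le> l k \<or> u k \<le> l j) \<and>
        (\<Sum>k<m. u k - l k) < d
        \<longrightarrow> (\<Sum>k<m. norm (g (f (u k)) - g (f (l k)))) < e"
  proof (intro exI[of _ d] conjI allI impI d)
    fix m :: nat and l u
    assume P: "(\<forall>k<m. a \<le> l k \<and> l k \<le> u k \<and> u k \<le> b) \<and>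
        (\<forall>j<m. \<forall>k<m. j \<noteq> k \<longrightarrow> u j \<le> l k \<or> u k \<le> l j) \<and>
        (\<Sum>k<m. u k - l k) < d"
    have "(\<Sum>k<m. norm (g (f (u k)) - g (f (l k)))) \<le> (\<Sum>k<m. norm (f (u k) - f (l k)) * K)"
      by (intro sum_mono) (metis K(2) assms(1) linear_diff bounded_linear.linear)
    also have "\<dots> = (\<Sum>k<m. norm (f (u k) - f (l k))) * K" by (simp add: sum_distrib_right)
    also have "\<dots> < e / K * K" using H[OF P] K by (simp add: pos_less_divide_eq)
    also have "\<dots> = e" using K by simp
    finally show "(\<Sum>k<m. norm (g (f (u k)) - g (f (l k)))) < e" .
  qed
qed

lemma sum_reindex_sqrtW: assumes "pos_vec w"
  shows "(\<Sum>\<nu>\<in>sqrtW w ` S. f \<nu>) = (\<Sum>\<mu>\<in>S. f (sqrtW w \<mu>))"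
  using inj_sqrtW[OF assms] by (simp add: sum.reindex inj_on_subset)

lemma sum_vec_sqrtW: assumes "pos_vec w"
  shows "(\<Sum>\<nu>\<in>sqrtW w ` S. g \<nu> *\<^sub>R \<nu>) = sqrtW w (\<Sum>\<mu>\<in>S. g (sqrtW w \<mu>) *\<^sub>R \<mu>)"
  by (simp add: sum_reindex_sqrtW[OF assms] linear_sum[OF linear_sqrtW] o_def
      linear_scale[OF linear_sqrtW])

lemma sum_comp_sqrtW: assumes "pos_vec w"
  shows "(\<Sum>\<nu>\<in>sqrtW w ` S. g \<nu> * \<nu> $ i) = sqrt (w$i) * (\<Sum>\<mu>\<in>S. g (sqrtW w \<mu>) * \<mu> $ i)"
  by (simp add: sum_reindex_sqrtW[OF assms] sqrtW_nth sum_distrib_left algebra_simps)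

lemma key_deriv: assumes "pos_vec w"
  shows "sqrtW w lam + (scaled_routing w R - mat 1) *v (sqrtW w a - sqrtW w b)
     = sqrtW w (lam + (R - mat 1) *v (a - b))"
  by (simp add: linear_diff[OF linear_sqrtW, symmetric] scaled_mult2[OF assms] linear_add[OF linear_sqrtW])

lemma pos_sqrtW: assumes "pos_vec w"
  shows "0 < sqrtW w x $ i \<longleftrightarrow> 0 < x $ i"
  using assms[unfolded pos_vec_def, rule_format, of i] by (simp add: sqrtW_nth zero_less_mult_iff)

lemma sqrt_pos: "pos_vec w \<Longrightarrow> 0 < sqrt (w $ i)"
  unfolding pos_vec_def by simp

lemma abs_cont_sqrtW: assumes "pos_vec w"
  shows "abs_cont_Rplus (\<lambda>t. sqrtW w (q t)) \<longleftrightarrow> abs_cont_Rplus q"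
proof
  assume "abs_cont_Rplus (\<lambda>t. sqrtW w (q t))"
  then have "abs_cont_Rplus (\<lambda>t. sqrtWi w (sqrtW w (q t)))"
    unfolding abs_cont_Rplus_def using abs_cont_bl[OF bl_sqrtWi] by blast
  then show "abs_cont_Rplus q" by (simp add: sqrtWi_sqrtW[OF assms])
next
  assume "abs_cont_Rplus q"
  then show "abs_cont_Rplus (\<lambda>t. sqrtW w (q t))"
    unfolding abs_cont_Rplus_def using abs_cont_bl[OF bl_sqrtW] by blast
qed

lemma fluid_fwd: assumes w: "pos_vec w" and F: "fluid_solution R S lam w q"
  shows "fluid_solution (scaled_routing w R) (sqrtW w ` S) (sqrtW w lam) 1 (\<lambda>t. sqrtW w (q t))"
proof -
  obtain s y where s01: "\<forall>\<mu>\<in>S. \<forall>t\<ge>0. 0 \<le> s \<mu> t \<and> s \<mu> t \<le> 1"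
    and yn: "\<forall>t\<ge>0. nonneg_vec (y t)"
    and AE: "AE t in lborel. 0 \<le> t \<longrightarrow>
           (q has_vector_derivative
              (lam + (R - mat 1) *v ((\<Sum>\<mu>\<in>S. s \<mu> t *\<^sub>R \<mu>) - y t))) (at t within {0..}) \<and>
           (\<Sum>\<mu>\<in>S. s \<mu> t) = 1 \<and>
           (\<forall>i. y t $ i \<le> (\<Sum>\<mu>\<in>S. s \<mu> t * \<mu> $ i)) \<and>
           (\<forall>i. q t $ i > 0 \<longrightarrow> y t $ i = 0) \<and>
           (\<forall>\<mu>\<in>S. \<mu> \<notin> wmw_set R S w (q t) \<longrightarrow> s \<mu> t = 0)"
    and ac: "abs_cont_Rplus q" and qn: "\<forall>t\<ge>0. nonneg_vec (q t)"
    using F unfolding fluid_solution_def by blast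
  define s' where "s' = (\<lambda>\<nu> t. s (sqrtWi w \<nu>) t)"
  define y' where "y' = (\<lambda>t. sqrtW w (y t))"
  have s'e: "s' (sqrtW w \<mu>) t = s \<mu> t" for \<mu> t by (simp add: s'_def sqrtWi_sqrtW[OF w])
  show ?thesis unfolding fluid_solution_def
  proof (intro conjI exI[of _ s'] exI[of _ y'])
    show "abs_cont_Rplus (\<lambda>t. sqrtW w (q t))" using ac abs_cont_sqrtW[OF w] by blast
    show "\<forall>t\<ge>0. nonneg_vec (sqrtW w (q t))" using qn nonneg_sqrtW[OF w] by blast
    show "\<forall>\<mu>\<in>sqrtW w ` S. \<forall>t\<ge>0. 0 \<le> s' \<mu> t \<and> s' \<mu> t \<le> 1" using s01 s'e by auto
    show "\<forall>t\<ge>0. nonneg_vec (y' t)" using yn nonneg_sqrtW[OF w] by (simp add: y'_def)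
    show "AE t in lborel. 0 \<le> t \<longrightarrow>
           ((\<lambda>t. sqrtW w (q t)) has_vector_derivative
              (sqrtW w lam + (scaled_routing w R - mat 1) *v ((\<Sum>\<mu>\<in>sqrtW w ` S. s' \<mu> t *\<^sub>R \<mu>) - y' t))) (at t within {0..}) \<and>
           (\<Sum>\<mu>\<in>sqrtW w ` S. s' \<mu> t) = 1 \<and>
           (\<forall>i. y' t $ i \<le> (\<Sum>\<mu>\<in>sqrtW w ` S. s' \<mu> t * \<mu> $ i)) \<and>
           (\<forall>i. sqrtW w (q t) $ i > 0 \<longrightarrow> y' t $ i = 0) \<and>
           (\<forall>\<mu>\<in>sqrtW w ` S. \<mu> \<notin> wmw_set (scaled_routing w R) (sqrtW w ` S) 1 (sqrtW w (q t)) \<longrightarrow> s' \<mu> t = 0)"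
      using AE
    proof (rule eventually_mono, intro impI)
      fix t :: real
      assume H: "0 \<le> t \<longrightarrow>
           (q has_vector_derivative
              (lam + (R - mat 1) *v ((\<Sum>\<mu>\<in>S. s \<mu> t *\<^sub>R \<mu>) - y t))) (at t within {0..}) \<and>
           (\<Sum>\<mu>\<in>S. s \<mu> t) = 1 \<and>
           (\<forall>i. y t $ i \<le> (\<Sum>\<mu>\<in>S. s \<mu> t * \<mu> $ i)) \<and>
           (\<forall>i. q t $ i > 0 \<longrightarrow> y t $ i = 0) \<and>
           (\<forall>\<mu>\<in>S. \<mu> \<notin> wmw_set R S w (q t) \<longrightarrow> s \<mu> t = 0)" and t: "0 \<le> t"
      from H t have D: "(q has_vector_derivative
              (lam + (R - mat 1) *v ((\<Sum>\<mu>\<in>S. s \<mu> t *\<^sub>R \<mu>) - y t))) (at t within {0..})"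
        and S1: "(\<Sum>\<mu>\<in>S. s \<mu> t) = 1"
        and Y: "\<forall>i. y t $ i \<le> (\<Sum>\<mu>\<in>S. s \<mu> t * \<mu> $ i)"
        and Z: "\<forall>i. q t $ i > 0 \<longrightarrow> y t $ i = 0"
        and M: "\<forall>\<mu>\<in>S. \<mu> \<notin> wmw_set R S w (q t) \<longrightarrow> s \<mu> t = 0" by auto
      have sv: "(\<Sum>\<mu>\<in>sqrtW w ` S. s' \<mu> t *\<^sub>R \<mu>) = sqrtW w (\<Sum>\<mu>\<in>S. s \<mu> t *\<^sub>R \<mu>)"
        by (simp add: sum_vec_sqrtW[OF w] s'e)
      show "((\<lambda>t. sqrtW w (q t)) has_vector_derivative
              (sqrtW w lam + (scaled_routing w R - mat 1) *v ((\<Sum>\<mu>\<in>sqrtW w ` S. s' \<mu> t *\<^sub>R \<mu>) - y' t))) (at t within {0..}) \<and>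
           (\<Sum>\<mu>\<in>sqrtW w ` S. s' \<mu> t) = 1 \<and>
           (\<forall>i. y' t $ i \<le> (\<Sum>\<mu>\<in>sqrtW w ` S. s' \<mu> t * \<mu> $ i)) \<and>
           (\<forall>i. sqrtW w (q t) $ i > 0 \<longrightarrow> y' t $ i = 0) \<and>
           (\<forall>\<mu>\<in>sqrtW w ` S. \<mu> \<notin> wmw_set (scaled_routing w R) (sqrtW w ` S) 1 (sqrtW w (q t)) \<longrightarrow> s' \<mu> t = 0)"
      proof (intro conjI allI impI ballI)
        show "((\<lambda>t. sqrtW w (q t)) has_vector_derivative
              (sqrtW w lam + (scaled_routing w R - mat 1) *v ((\<Sum>\<mu>\<in>sqrtW w ` S. s' \<mu> t *\<^sub>R \<mu>) - y' t))) (at t within {0..})"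
          unfolding sv y'_def key_deriv[OF w]
          by (rule bounded_linear.has_vector_derivative[OF bl_sqrtW D])
        show "(\<Sum>\<mu>\<in>sqrtW w ` S. s' \<mu> t) = 1"
          using S1 by (simp add: sum_reindex_sqrtW[OF w] s'e)
      next
        fix i
        show "y' t $ i \<le> (\<Sum>\<mu>\<in>sqrtW w ` S. s' \<mu> t * \<mu> $ i)"
          using Y sqrt_pos[OF w, of i]
          by (simp add: sum_comp_sqrtW[OF w] s'e y'_def sqrtW_nth)
      next
        fix i assume "sqrtW w (q t) $ i > 0"
        then have "q t $ i > 0" by (simp only: pos_sqrtW[OF w])
        then show "y' t $ i = 0" using Z by (simp add: y'_def sqrtW_nth)
      next
        fix \<nu> assume "\<nu> \<in> sqrtW w ` S"
          and nm: "\<nu> \<notin> wmw_set (scaled_routing w R) (sqrtW w ` S) 1 (sqrtW w (q t))"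
        then obtain \<mu> where \<mu>: "\<mu> \<in> S" "\<nu> = sqrtW w \<mu>" by blast
        show "s' \<nu> t = 0" using M \<mu> nm wmw_scaled[OF w] s'e by auto
      qed
    qed
  qed
qed


lemma fluid_bwd: assumes w: "pos_vec w"
  and F: "fluid_solution (scaled_routing w R) (sqrtW w ` S) (sqrtW w lam) 1 (\<lambda>t. sqrtW w (q t))"
  shows "fluid_solution R S lam w q"
proof -
  obtain s' y' where s01: "\<forall>\<mu>\<in>sqrtW w ` S. \<forall>t\<ge>0. 0 \<le> s' \<mu> t \<and> s' \<mu> t \<le> 1"
    and yn: "\<forall>t\<ge>0. nonneg_vec (y' t)"
    and AE: "AE t in lborel. 0 \<le> t \<longrightarrow>
           ((\<lambda>t. sqrtW w (q t)) has_vector_derivative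
              (sqrtW w lam + (scaled_routing w R - mat 1) *v ((\<Sum>\<mu>\<in>sqrtW w ` S. s' \<mu> t *\<^sub>R \<mu>) - y' t))) (at t within {0..}) \<and>
           (\<Sum>\<mu>\<in>sqrtW w ` S. s' \<mu> t) = 1 \<and>
           (\<forall>i. y' t $ i \<le> (\<Sum>\<mu>\<in>sqrtW w ` S. s' \<mu> t * \<mu> $ i)) \<and>
           (\<forall>i. sqrtW w (q t) $ i > 0 \<longrightarrow> y' t $ i = 0) \<and>
           (\<forall>\<mu>\<in>sqrtW w ` S. \<mu> \<notin> wmw_set (scaled_routing w R) (sqrtW w ` S) 1 (sqrtW w (q t)) \<longrightarrow> s' \<mu> t = 0)"
    and ac: "abs_cont_Rplus (\<lambda>t. sqrtW w (q t))" and qn: "\<forall>t\<ge>0. nonneg_vec (sqrtW w (q t))"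
    using F unfolding fluid_solution_def by blast
  define s where "s = (\<lambda>\<mu> t. s' (sqrtW w \<mu>) t)"
  define y where "y = (\<lambda>t. sqrtWi w (y' t))"
  have y'e: "y' t = sqrtW w (y t)" for t by (simp add: y_def sqrtW_sqrtWi[OF w])
  show ?thesis unfolding fluid_solution_def
  proof (intro conjI exI[of _ s] exI[of _ y])
    show "abs_cont_Rplus q" using ac abs_cont_sqrtW[OF w] by blast
    show "\<forall>t\<ge>0. nonneg_vec (q t)" using qn nonneg_sqrtW[OF w] by blast
    show "\<forall>\<mu>\<in>S. \<forall>t\<ge>0. 0 \<le> s \<mu> t \<and> s \<mu> t \<le> 1" using s01 by (auto simp: s_def)
    show "\<forall>t\<ge>0. nonneg_vec (y t)" using yn nonneg_sqrtW[OF w] y'e by metis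
    show "AE t in lborel. 0 \<le> t \<longrightarrow>
           (q has_vector_derivative
              (lam + (R - mat 1) *v ((\<Sum>\<mu>\<in>S. s \<mu> t *\<^sub>R \<mu>) - y t))) (at t within {0..}) \<and>
           (\<Sum>\<mu>\<in>S. s \<mu> t) = 1 \<and>
           (\<forall>i. y t $ i \<le> (\<Sum>\<mu>\<in>S. s \<mu> t * \<mu> $ i)) \<and>
           (\<forall>i. q t $ i > 0 \<longrightarrow> y t $ i = 0) \<and>
           (\<forall>\<mu>\<in>S. \<mu> \<notin> wmw_set R S w (q t) \<longrightarrow> s \<mu> t = 0)"
      using AE
    proof (rule eventually_mono, intro impI)
      fix t :: real
      assume H: "0 \<le> t \<longrightarrow>
           ((\<lambda>t. sqrtW w (q t)) has_vector_derivative
              (sqrtW w lam + (scaled_routing w R - mat 1) *v ((\<Sum>\<mu>\<in>sqrtW w ` S. s' \<mu> t *\<^sub>R \<mu>) - y' t))) (at t within {0..}) \<and>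
           (\<Sum>\<mu>\<in>sqrtW w ` S. s' \<mu> t) = 1 \<and>
           (\<forall>i. y' t $ i \<le> (\<Sum>\<mu>\<in>sqrtW w ` S. s' \<mu> t * \<mu> $ i)) \<and>
           (\<forall>i. sqrtW w (q t) $ i > 0 \<longrightarrow> y' t $ i = 0) \<and>
           (\<forall>\<mu>\<in>sqrtW w ` S. \<mu> \<notin> wmw_set (scaled_routing w R) (sqrtW w ` S) 1 (sqrtW w (q t)) \<longrightarrow> s' \<mu> t = 0)"
        and t: "0 \<le> t"
      from H t have D: "((\<lambda>t. sqrtW w (q t)) has_vector_derivative
              (sqrtW w lam + (scaled_routing w R - mat 1) *v ((\<Sum>\<mu>\<in>sqrtW w ` S. s' \<mu> t *\<^sub>R \<mu>) - y' t))) (at t within {0..})"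
        and S1: "(\<Sum>\<mu>\<in>sqrtW w ` S. s' \<mu> t) = 1"
        and Y: "\<forall>i. y' t $ i \<le> (\<Sum>\<mu>\<in>sqrtW w ` S. s' \<mu> t * \<mu> $ i)"
        and Z: "\<forall>i. sqrtW w (q t) $ i > 0 \<longrightarrow> y' t $ i = 0"
        and M: "\<forall>\<mu>\<in>sqrtW w ` S. \<mu> \<notin> wmw_set (scaled_routing w R) (sqrtW w ` S) 1 (sqrtW w (q t)) \<longrightarrow> s' \<mu> t = 0"
        by auto
      have sv: "(\<Sum>\<mu>\<in>sqrtW w ` S. s' \<mu> t *\<^sub>R \<mu>) = sqrtW w (\<Sum>\<mu>\<in>S. s \<mu> t *\<^sub>R \<mu>)"
        by (simp add: sum_vec_sqrtW[OF w] s_def)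
      show "(q has_vector_derivative
              (lam + (R - mat 1) *v ((\<Sum>\<mu>\<in>S. s \<mu> t *\<^sub>R \<mu>) - y t))) (at t within {0..}) \<and>
           (\<Sum>\<mu>\<in>S. s \<mu> t) = 1 \<and>
           (\<forall>i. y t $ i \<le> (\<Sum>\<mu>\<in>S. s \<mu> t * \<mu> $ i)) \<and>
           (\<forall>i. q t $ i > 0 \<longrightarrow> y t $ i = 0) \<and>
           (\<forall>\<mu>\<in>S. \<mu> \<notin> wmw_set R S w (q t) \<longrightarrow> s \<mu> t = 0)"
      proof (intro conjI allI impI ballI)
        have "((\<lambda>t. sqrtWi w (sqrtW w (q t))) has_vector_derivative
              sqrtWi w (sqrtW w (lam + (R - mat 1) *v ((\<Sum>\<mu>\<in>S. s \<mu> t *\<^sub>R \<mu>) - y t)))) (at t within {0..})"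
          using bounded_linear.has_vector_derivative[OF bl_sqrtWi D]
          unfolding sv y'e key_deriv[OF w] .
        then show "(q has_vector_derivative
              (lam + (R - mat 1) *v ((\<Sum>\<mu>\<in>S. s \<mu> t *\<^sub>R \<mu>) - y t))) (at t within {0..})"
          by (simp add: sqrtWi_sqrtW[OF w])
        show "(\<Sum>\<mu>\<in>S. s \<mu> t) = 1"
          using S1 by (simp add: sum_reindex_sqrtW[OF w] s_def)
      next
        fix i
        have "sqrt (w$i) * y t $ i \<le> sqrt (w$i) * (\<Sum>\<mu>\<in>S. s \<mu> t * \<mu> $ i)"
          using Y[rule_format, of i] by (simp add: sum_comp_sqrtW[OF w] s_def y'e sqrtW_nth)
        then show "y t $ i \<le> (\<Sum>\<mu>\<in>S. s \<mu> t * \<mu> $ i)"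
          using sqrt_pos[OF w, of i] by (simp add: mult_le_cancel_left_pos)
      next
        fix i assume "q t $ i > 0"
        then have "sqrtW w (q t) $ i > 0" by (simp only: pos_sqrtW[OF w])
        then have "y' t $ i = 0" using Z by blast
        then show "y t $ i = 0" by (simp add: y_def sqrtWi_nth)
      next
        fix \<mu> assume \<mu>: "\<mu> \<in> S" and nm: "\<mu> \<notin> wmw_set R S w (q t)"
        show "s \<mu> t = 0" using M \<mu> nm wmw_scaled[OF w] by (auto simp: s_def)
      qed
    qed
  qed
qed

lemma qlp_part: assumes w: "pos_vec w" and Q: "wmw_qlp R S w A Q"
  shows "mw_qlp (scaled_routing w R) (sqrtW w ` S) (\<lambda>t. sqrtW w (A t)) (\<lambda>t. sqrtW w (Q t))"
proof -
  obtain \<mu> where Q0: "nonneg_vec (Q 0)" and H: "\<forall>t. \<mu> t \<in> wmw_set R S w (Q t) \<and>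
        Q (Suc t) = Q t + A t + (R - mat 1) *v vmin (\<mu> t) (Q t)"
    using Q unfolding wmw_qlp_def by blast
  show ?thesis unfolding wmw_qlp_def
  proof (intro conjI exI[of _ "\<lambda>t. sqrtW w (\<mu> t)"] allI)
    show "nonneg_vec (sqrtW w (Q 0))" using Q0 nonneg_sqrtW[OF w] by blast
  next
    fix t
    show "sqrtW w (\<mu> t) \<in> wmw_set (scaled_routing w R) (sqrtW w ` S) 1 (sqrtW w (Q t))"
      using H wmw_scaled[OF w] by blast
    show "sqrtW w (Q (Suc t)) = sqrtW w (Q t) + sqrtW w (A t) +
      (scaled_routing w R - mat 1) *v vmin (sqrtW w (\<mu> t)) (sqrtW w (Q t))"
      using H by (simp add: vmin_sqrtW[OF w] scaled_mult2[OF w] linear_add[OF linear_sqrtW])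
  qed
qed

theorem lemma4:
  fixes R :: "real^'n^'n" and S :: "(real^'n) set" and w lam :: "real^'n"
    and A Q :: "nat \<Rightarrow> real^'n"
  assumes R_nonneg: "\<forall>i j. 0 \<le> R $ i $ j"
    and S_fin: "finite S" and S_nonneg: "\<forall>\<mu>\<in>S. nonneg_vec \<mu>"
    and w_pos: "pos_vec w"
    and A_nonneg: "\<forall>t. nonneg_vec (A t)"
    and lam_nonneg: "nonneg_vec lam"
    and Q: "wmw_qlp R S w A Q"
  shows "mw_qlp (scaled_routing w R) (sqrtW w ` S) (\<lambda>t. sqrtW w (A t)) (\<lambda>t. sqrtW w (Q t))
       \<and> (\<forall>q :: real \<Rightarrow> real^'n.
            fluid_solution (scaled_routing w R) (sqrtW w ` S) (sqrtW w lam) 1 (\<lambda>t. sqrtW w (q t))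
            \<longleftrightarrow> fluid_solution R S lam w q)"
  using qlp_part[OF w_pos Q] fluid_fwd[OF w_pos] fluid_bwd[OF w_pos] by blast

end
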